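(* Let $\lambda>0$ and $\varepsilon>0$ be reals and $k>8$ an integer such that $\cos(2\pi/k)-\sin(2\pi/k)=\frac{\lambda+\varepsilon+1}{(\lambda+1)(\varepsilon+1)}$. Let $G=(V,E)$ be a $\lambda$-civilized unit disk graph and let $YY_k$ be its Yao-Yao graph. Then $YY_k$ has maximum degree at most $2k$, is a length $(1+\varepsilon)$-spanner of $G$, and has power stretch factor $(1+\varepsilon)^\beta$ with respect to $G$.
   Context: Unit disk graph (UDG): $V$ is a finite set of points in the Euclidean plane and $E=\{uv: |uv|\le 1\}$, with $|uv|$ Euclidean distance; $G$ is connected. $G$ is $\lambda$-civilized if no two nodes are at distance smaller than $\lambda$. A subgraph $H$ of $G$ on the same vertex set is a length $t$-spanner if for all $u,v$ the length of a shortest $uv$-path in $H$ is at most $t$ times that in $G$. $\beta$ is a fixed real constant (path loss gradient) between 2 and 5; the power of a path is $\sum |e|^\beta$ over its edges $e$; $H$ has power stretch factor $\rho$ if for all $u,v$ the power of a minimum-power $uv$-path in $H$ is at most $\rho$ times the power of a minimum-power $uv$-path in $G$. Cones: with $\theta=2\pi/k$, at each point $u$ the plane is partitioned into $k$ half-open half-closed cones with apex $u$ of angle $\theta$, bounded by $k$ equally spaced rays (same directions at every node); $K_u(v)$ is the cone with apex $u$ containing $v$; an edge $uw$ lies in $K_u$ if $w\in K_u$. Identifiers: nodes have distinct IDs; $\mathrm{ID}(\overrightarrow{uv})=(|uv|,\mathrm{ID}(u),\mathrm{ID}(v))$ compared lexicographically; $\mathrm{ID}(uv)=\min\{\mathrm{ID}(\overrightarrow{uv}),\mathrm{ID}(\overrightarrow{vu})\}$.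 Yao step: for each node $u$ and each cone $K_u$ containing some edge of $E$ incident to $u$, add to $E_Y$ the directed edge $\overrightarrow{uv}$ where $uv$ is the edge of $E$ in $K_u$ with lowest $\mathrm{ID}(uv)$. Reverse Yao step: starting from $E_{YY}=E_Y$, for each node $v$ and each cone $K_v$, among edges $\overrightarrow{uv}\in E_Y$ with $u\in K_v$ keep only the one of smallest ID. $YY_k=(V,E_{YY})$, viewed as undirected. *)

theory Defs
  imports "HOL-Analysis.Analysis"
begin

definition udg_edges :: "complex set \<Rightarrow> (complex \<times> complex) set" where
  "udg_edges V = {(u, v). u \<in> V \<and> v \<in> V \<and> u \<noteq> v \<and> cmod (u - v) \<le> 1}"

definition civilized :: "real \<Rightarrow> complex set \<Rightarrow> bool" where
  "civilized lam V \<longleftrightarrow> (\<forall>u\<in>V. \<forall>v\<in>V. u \<noteq> v \<longrightarrow> lam \<le> cmod (u - v))"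

definition is_path :: "('a \<times> 'a) set \<Rightarrow> 'a \<Rightarrow> 'a \<Rightarrow> 'a list \<Rightarrow> bool" where
  "is_path E u v p \<longleftrightarrow> p \<noteq> [] \<and> hd p = u \<and> last p = v \<and>
     (\<forall>i < length p - 1. (p ! i, p ! Suc i) \<in> E)"

definition graph_connected :: "complex set \<Rightarrow> (complex \<times> complex) set \<Rightarrow> bool" where
  "graph_connected V E \<longleftrightarrow> (\<forall>u\<in>V. \<forall>v\<in>V. \<exists>p. is_path E u v p)"

definition path_length :: "complex list \<Rightarrow> real" where
  "path_length p = sum_list (map (\<lambda>(a, b). cmod (a - b)) (zip p (tl p)))"

definition path_power :: "real \<Rightarrow> complex list \<Rightarrow> real" where
  "path_power \<beta> p = sum_list (map (\<lambda>(a, b). cmod (a - b) powr \<beta>) (zip p (tl p)))"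

text \<open>Cone index: the k cones of angle 2*pi/k at apex u, bounded by the rays
  of directions phi + j*2*pi/k (same at every node); cone j is the half-open
  angular range [phi + j*theta, phi + (j+1)*theta).\<close>
definition cone_index :: "nat \<Rightarrow> real \<Rightarrow> complex \<Rightarrow> complex \<Rightarrow> int" where
  "cone_index k \<phi> u w =
     \<lfloor>(2 * pi * frac ((Arg (w - u) - \<phi>) / (2 * pi))) / (2 * pi / real k)\<rfloor>"

definition dir_id :: "(complex \<Rightarrow> nat) \<Rightarrow> complex \<Rightarrow> complex \<Rightarrow> real \<times> nat \<times> nat" where
  "dir_id idf u v = (cmod (u - v), idf u, idf v)"

fun lex_le :: "real \<times> nat \<times> nat \<Rightarrow> real \<times> nat \<times> nat \<Rightarrow> bool" where
  "lex_le (a1, b1, c1) (a2, b2, c2) \<longleftrightarrow>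
     a1 < a2 \<or> (a1 = a2 \<and> (b1 < b2 \<or> (b1 = b2 \<and> c1 \<le> c2)))"

definition lex_min :: "real \<times> nat \<times> nat \<Rightarrow> real \<times> nat \<times> nat \<Rightarrow> real \<times> nat \<times> nat" where
  "lex_min x y = (if lex_le x y then x else y)"

definition edge_id :: "(complex \<Rightarrow> nat) \<Rightarrow> complex \<Rightarrow> complex \<Rightarrow> real \<times> nat \<times> nat" where
  "edge_id idf u v = lex_min (dir_id idf u v) (dir_id idf v u)"

definition yao_edges :: "nat \<Rightarrow> real \<Rightarrow> (complex \<Rightarrow> nat) \<Rightarrow> complex set \<Rightarrow> (complex \<times> complex) set" where
  "yao_edges k \<phi> idf V = {(u, v). (u, v) \<in> udg_edges V \<and>
     (\<forall>w. (u, w) \<in> udg_edges V \<and> cone_index k \<phi> u w = cone_index k \<phi> u v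
          \<longrightarrow> lex_le (edge_id idf u v) (edge_id idf u w))}"

definition yy_directed :: "nat \<Rightarrow> real \<Rightarrow> (complex \<Rightarrow> nat) \<Rightarrow> complex set \<Rightarrow> (complex \<times> complex) set" where
  "yy_directed k \<phi> idf V = {(u, v). (u, v) \<in> yao_edges k \<phi> idf V \<and>
     (\<forall>w. (w, v) \<in> yao_edges k \<phi> idf V \<and> cone_index k \<phi> v w = cone_index k \<phi> v u
          \<longrightarrow> lex_le (edge_id idf u v) (edge_id idf w v))}"

definition yy_edges :: "nat \<Rightarrow> real \<Rightarrow> (complex \<Rightarrow> nat) \<Rightarrow> complex set \<Rightarrow> (complex \<times> complex) set" where
  "yy_edges k \<phi> idf V = {(u, v). (u, v) \<in> yy_directed k \<phi> idf V \<or> (v, u) \<in> yy_directed k \<phi> idf V}"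

definition max_degree_le :: "complex set \<Rightarrow> (complex \<times> complex) set \<Rightarrow> nat \<Rightarrow> bool" where
  "max_degree_le V H d \<longleftrightarrow> (\<forall>u\<in>V. card {v. (u, v) \<in> H} \<le> d)"

text \<open>Length t-spanner: every u-v path in G is matched by a u-v path in H of length at most t
  times as long (equivalently, shortest-path distance in H at most t times that in G).\<close>
definition length_spanner :: "complex set \<Rightarrow> (complex \<times> complex) set \<Rightarrow> (complex \<times> complex) set \<Rightarrow> real \<Rightarrow> bool" where
  "length_spanner V E H t \<longleftrightarrow> (\<forall>u\<in>V. \<forall>v\<in>V. \<forall>p. is_path E u v p \<longrightarrow>
      (\<exists>q. is_path H u v q \<and> path_length q \<le> t * path_length p))"

definition power_stretch :: "real \<Rightarrow> complex set \<Rightarrow> (complex \<times> complex) set \<Rightarrow> (complex \<times> complex) set \<Rightarrow> real \<Rightarrow> bool" where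
  "power_stretch \<beta> V E H \<rho> \<longleftrightarrow> (\<forall>u\<in>V. \<forall>v\<in>V. \<forall>p. is_path E u v p \<longrightarrow>
      (\<exists>q. is_path H u v q \<and> path_power \<beta> q \<le> \<rho> * path_power \<beta> p))"

end

theory Submission imports Defs begin


lemma is_path_single: "is_path E u v [a] \<longleftrightarrow> a = u \<and> a = v"
  by (auto simp: is_path_def)

lemma is_path_Cons2: "is_path E u v (a # b # r) \<longleftrightarrow> a = u \<and> (a, b) \<in> E \<and> is_path E b v (b # r)"
  unfolding is_path_def by (auto simp: All_less_Suc2)

definition pw :: "('a \<times> 'a \<Rightarrow> real) \<Rightarrow> 'a list \<Rightarrow> real" where
  "pw w p = sum_list (map w (zip p (tl p)))"

lemma pw_single[simp]: "pw w [a] = 0" by (simp add: pw_def)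
lemma pw_Cons2[simp]: "pw w (a # b # r) = w (a, b) + pw w (b # r)" by (simp add: pw_def)

lemma path_length_pw: "path_length p = pw (\<lambda>(a, b). cmod (a - b)) p"
  by (simp add: path_length_def pw_def)
lemma path_power_pw: "path_power \<beta> p = pw (\<lambda>(a, b). cmod (a - b) powr \<beta>) p"
  by (simp add: path_power_def pw_def)

lemma path_concat:
  "is_path H u x q1 \<Longrightarrow> is_path H x v q2 \<Longrightarrow>
   is_path H u v (q1 @ tl q2) \<and> pw w (q1 @ tl q2) = pw w q1 + pw w q2"
proof (induction q1 arbitrary: u)
  case Nil then show ?case by (simp add: is_path_def)
next
  case (Cons a r)
  show ?case
  proof (cases r)
    case Nil
    with Cons.prems have "a = u" "a = x" by (auto simp: is_path_single)
    moreover from Cons.prems(2) have "q2 = x # tl q2" by (auto simp: is_path_def)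
    ultimately show ?thesis using Cons.prems(2) Nil by (metis append_Cons append_Nil pw_single add_0)
  next
    case (Cons b r')
    from Cons.prems Cons have h: "a = u" "(a, b) \<in> H" "is_path H b x (b # r')"
      by (auto simp: is_path_Cons2)
    from Cons.IH[OF h(3)[folded Cons] Cons.prems(2)] Cons
    have "is_path H b v (b # (r' @ tl q2))" "pw w (b # (r' @ tl q2)) = pw w (b # r') + pw w q2"
      by auto
    then show ?thesis using h Cons by (simp add: is_path_Cons2)
  qed
qed

lemma path_lift:
  assumes e: "\<And>a b. (a, b) \<in> E \<Longrightarrow> \<exists>q. is_path H a b q \<and> pw w q \<le> t * w (a, b)"
  shows "is_path E u v p \<Longrightarrow> \<exists>q. is_path H u v q \<and> pw w q \<le> t * pw w p"
proof (induction p arbitrary: u)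
  case Nil then show ?case by (simp add: is_path_def)
next
  case (Cons a r)
  show ?case
  proof (cases r)
    case Nil
    with Cons.prems have "a = u" "a = v" by (auto simp: is_path_single)
    then show ?thesis using Cons.prems Nil by (intro exI[of _ "[a]"]) (auto simp: is_path_single)
  next
    case (Cons b r')
    from Cons.prems Cons have h: "a = u" "(a, b) \<in> E" "is_path E b v (b # r')"
      by (auto simp: is_path_Cons2)
    from Cons.IH[of b] h(3) Cons obtain q2 where q2: "is_path H b v q2" "pw w q2 \<le> t * pw w r"
      by auto
    from e[OF h(2)] obtain q1 where q1: "is_path H a b q1" "pw w q1 \<le> t * w (a, b)" by auto
    from path_concat[OF q1(1) q2(1), of w] q1 q2 h Cons show ?thesis
      by (intro exI[of _ "q1 @ tl q2"]) (auto simp: distrib_left)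
  qed
qed

lemma powr_superadd:
  fixes x y b :: real assumes "0 \<le> x" "0 \<le> y" "1 \<le> b"
  shows "x powr b + y powr b \<le> (x + y) powr b"
proof (cases "x + y = 0")
  case True then have "x = 0" "y = 0" using assms by auto
  then show ?thesis by simp
next
  case False
  define s where "s = x + y"
  have s: "0 < s" using False assms s_def by auto
  have a: "(x / s) powr b \<le> (x / s) powr 1"
    by (rule powr_mono') (use assms s s_def in auto)
  have b: "(y / s) powr b \<le> (y / s) powr 1"
    by (rule powr_mono') (use assms s s_def in auto)
  have "x powr b = s powr b * (x / s) powr b" using s assms by (simp add: powr_divide)
  also have "\<dots> \<le> s powr b * (x / s)" using a assms s by (intro mult_left_mono) auto
  finally have 1: "x powr b \<le> s powr b * (x / s)" .
  have "y powr b = s powr b * (y / s) powr b" using s assms by (simp add: powr_divide)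
  also have "\<dots> \<le> s powr b * (y / s)" using b assms s by (intro mult_left_mono) auto
  finally have 2: "y powr b \<le> s powr b * (y / s)" .
  have "s powr b * (x / s) + s powr b * (y / s) = s powr b * ((x + y) / s)"
    by (simp add: add_divide_distrib ring_distribs)
  also have "(x + y) / s = 1" using s s_def by simp
  finally have "s powr b * (x / s) + s powr b * (y / s) = s powr b" by simp
  with 1 2 show ?thesis unfolding s_def by linarith
qed

lemma pw_nonneg: "pw (\<lambda>(a, b). cmod (a - b)) p \<ge> 0"
  by (induction p rule: induct_list012) (auto simp: pw_def)

lemma power_le_length:
  assumes "1 \<le> b"
  shows "pw (\<lambda>(a, b'). cmod (a - b') powr b) p \<le> (pw (\<lambda>(a, b). cmod (a - b)) p) powr b"
proof (induction p rule: induct_list012)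
  case 1 then show ?case by (simp add: pw_def)
next
  case (2 x) then show ?case by simp
next
  case (3 x y zs)
  have "pw (\<lambda>(a, b'). cmod (a - b') powr b) (x # y # zs)
      = cmod (x - y) powr b + pw (\<lambda>(a, b'). cmod (a - b') powr b) (y # zs)" by simp
  also have "\<dots> \<le> cmod (x - y) powr b + (pw (\<lambda>(a, b). cmod (a - b)) (y # zs)) powr b"
    using 3 by simp
  also have "\<dots> \<le> (cmod (x - y) + pw (\<lambda>(a, b). cmod (a - b)) (y # zs)) powr b"
    by (rule powr_superadd) (use assms pw_nonneg in auto)
  finally show ?case by simp
qed



lemma dist_cos:
  "(cmod (a - b))^2 = (cmod a)^2 + (cmod b)^2 - 2 * cmod a * cmod b * cos (Arg a - Arg b)"
proof -
  have ra: "Re a = cmod a * cos (Arg a)" "Im a = cmod a * sin (Arg a)"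
    using Re_rcis[of "cmod a" "Arg a"] Im_rcis[of "cmod a" "Arg a"] by (simp_all add: rcis_cmod_Arg)
  have rb: "Re b = cmod b * cos (Arg b)" "Im b = cmod b * sin (Arg b)"
    using Re_rcis[of "cmod b" "Arg b"] Im_rcis[of "cmod b" "Arg b"] by (simp_all add: rcis_cmod_Arg)
  have "(cmod (a - b))^2 = (Re a - Re b)^2 + (Im a - Im b)^2" by (simp add: cmod_power2)
  also have "\<dots> = (Re a)^2 + (Im a)^2 + ((Re b)^2 + (Im b)^2) - 2 * (Re a * Re b + Im a * Im b)"
    by (simp add: power2_eq_square algebra_simps)
  also have "\<dots> = (cmod a)^2 + (cmod b)^2 - 2 * (Re a * Re b + Im a * Im b)"
    by (simp add: cmod_power2)
  also have "Re a * Re b + Im a * Im b = cmod a * cmod b * cos (Arg a - Arg b)"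
    unfolding ra rb cos_diff by (simp add: algebra_simps)
  finally show ?thesis by simp
qed

lemma cone_cos:
  assumes k: "2 \<le> k" and eq: "cone_index k \<phi> u v = cone_index k \<phi> u w"
  shows "cos (2 * pi / real k) \<le> cos (Arg (v - u) - Arg (w - u))"
proof -
  define X where "X = (Arg (v - u) - \<phi>) / (2 * pi)"
  define Y where "Y = (Arg (w - u) - \<phi>) / (2 * pi)"
  define \<theta> where "\<theta> = 2 * pi / real k"
  have th: "0 < \<theta>" "\<theta> \<le> pi" using k by (auto simp: \<theta>_def field_simps)
  define s where "s = 2 * pi * frac X"
  define t where "t = 2 * pi * frac Y"
  have "\<lfloor>s / \<theta>\<rfloor> = \<lfloor>t / \<theta>\<rfloor>" using eq
    by (simp add: cone_index_def s_def t_def X_def Y_def \<theta>_def)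
  then have "\<bar>s / \<theta> - t / \<theta>\<bar> < 1" by linarith
  then have "\<bar>s - t\<bar> / \<theta> < 1" using th by (simp add: diff_divide_distrib[symmetric])
  then have st: "\<bar>s - t\<bar> < \<theta>" using th by (simp add: field_simps)
  have "Arg (v - u) - Arg (w - u) = 2 * pi * (X - Y)" using pi_gt_zero
    by (simp add: X_def Y_def field_simps)
  also have "X - Y = frac X - frac Y + of_int (\<lfloor>X\<rfloor> - \<lfloor>Y\<rfloor>)" by (simp add: frac_def)
  finally have "Arg (v - u) - Arg (w - u) = (s - t) + (2 * pi) * of_int (\<lfloor>X\<rfloor> - \<lfloor>Y\<rfloor>)"
    by (simp add: s_def t_def algebra_simps)
  then obtain n :: int where "Arg (v - u) - Arg (w - u) = (s - t) + (2 * pi) * of_int n" by blast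
  then have "cos (Arg (v - u) - Arg (w - u)) = cos (s - t)"
    by (simp only: cos_add cos_int_2pin sin_int_2pin)
  also have "\<dots> = cos \<bar>s - t\<bar>" by simp
  also have "cos \<theta> \<le> cos \<bar>s - t\<bar>" by (rule cos_monotone_0_pi_le) (use st th in auto)
  finally show ?thesis unfolding \<theta>_def .
qed

lemma cone_range:
  assumes "0 < k" shows "cone_index k \<phi> u w \<in> {0..<int k}"
proof -
  define X where "X = (Arg (w - u) - \<phi>) / (2 * pi)"
  have e: "(2 * pi * frac X) / (2 * pi / real k) = real k * frac X" using assms by simp
  have "0 \<le> real k * frac X" "real k * frac X < real k"
    using assms frac_lt_1[of X] frac_ge_0[of X] by auto
  then show ?thesis unfolding cone_index_def X_def[symmetric] e
    by (auto simp: floor_less_iff)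
qed

lemma geom:
  fixes c :: real
  assumes k: "2 \<le> k" and eq: "cone_index k \<phi> u v = cone_index k \<phi> u w"
    and le: "cmod (w - u) \<le> cmod (v - u)"
    and c: "c = cos (2 * pi / real k) - sin (2 * pi / real k)"
  shows "cmod (w - v) \<le> cmod (v - u) - c * cmod (w - u)"
proof -
  define \<theta> where "\<theta> = 2 * pi / real k"
  have th: "0 < \<theta>" "\<theta> \<le> pi" using k by (auto simp: \<theta>_def field_simps)
  have sn: "0 \<le> sin \<theta>" using th by (simp add: sin_ge_zero)
  have cs: "cos \<theta> \<le> 1" by simp
  define a where "a = cmod (v - u)"
  define b where "b = cmod (w - u)"
  define al where "al = cos (Arg (v - u) - Arg (w - u))"
  have ab: "0 \<le> b" "b \<le> a" using le by (auto simp: a_def b_def)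
  have al: "cos \<theta> \<le> al" using cone_cos[OF k eq] by (simp add: al_def \<theta>_def)
  have c': "c = cos \<theta> - sin \<theta>" using c by (simp add: \<theta>_def)
  have "(cmod (w - v))^2 = (cmod ((v - u) - (w - u)))^2" by (simp add: norm_minus_commute)
  also have "\<dots> = a^2 + b^2 - 2 * a * b * al" unfolding dist_cos a_def b_def al_def ..
  also have "\<dots> \<le> a^2 + b^2 - 2 * a * b * cos \<theta>"
    using al ab by (simp add: mult_left_mono)
  also have "\<dots> \<le> (a - c * b)^2"
  proof -
    have id: "(a - c * b)^2 - (a^2 + b^2 - 2 * a * b * cos \<theta>) = 2 * b * sin \<theta> * (a - b * cos \<theta>)"
    proof -
      have one: "cos \<theta> * cos \<theta> + sin \<theta> * sin \<theta> = 1" by (simp add: sin_cos_squared_add3)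
      show ?thesis using one unfolding c' power2_eq_square by algebra
    qed
    have "b * cos \<theta> \<le> b" using ab cs by (simp add: mult_left_le)
    then have "0 \<le> 2 * b * sin \<theta> * (a - b * cos \<theta>)" using ab sn by simp
    with id show ?thesis by linarith
  qed
  finally have sq: "(cmod (w - v))^2 \<le> (a - c * b)^2" .
  have "c \<le> 1" unfolding c' using sn cs by linarith
  then have "c * b \<le> b" using mult_right_mono[of c 1 b] ab by simp
  then have "0 \<le> a - c * b" using ab by linarith
  from power2_le_imp_le[OF sq this] show ?thesis by (simp add: a_def b_def)
qed



lemma lex_le_refl: "lex_le x x" by (cases x) auto
lemma lex_le_total: "lex_le x y \<or> lex_le y x" by (cases x; cases y) auto
lemma lex_le_trans: "lex_le x y \<Longrightarrow> lex_le y z \<Longrightarrow> lex_le x z" by (cases x; cases y; cases z) auto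
lemma lex_le_antisym: "lex_le x y \<Longrightarrow> lex_le y x \<Longrightarrow> x = y" by (cases x; cases y) auto
lemma lex_le_fst: "lex_le x y \<Longrightarrow> fst x \<le> fst y" by (cases x; cases y) auto

lemma edge_id_fst: "fst (edge_id idf u v) = cmod (u - v)"
  by (simp add: edge_id_def lex_min_def dir_id_def norm_minus_commute)

lemma edge_id_sym: "edge_id idf u v = edge_id idf v u"
  unfolding edge_id_def lex_min_def using lex_le_antisym lex_le_total by metis

lemma edge_id_inj:
  assumes "idf u \<noteq> idf v" "idf u \<noteq> idf v'" "edge_id idf u v = edge_id idf u v'"
  shows "idf v = idf v'"
  using assms unfolding edge_id_def lex_min_def dir_id_def by (auto split: if_splits)

lemma ex_min:
  assumes "finite S" "S \<noteq> {}"
  shows "\<exists>x\<in>S. \<forall>y\<in>S. lex_le (f x) (f y)"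
  using assms
proof (induction S rule: finite_ne_induct)
  case (singleton x) then show ?case by (simp add: lex_le_refl)
next
  case (insert a F)
  then obtain x where x: "x \<in> F" "\<forall>y\<in>F. lex_le (f x) (f y)" by blast
  show ?case
  proof (cases "lex_le (f a) (f x)")
    case True then show ?thesis using x lex_le_trans lex_le_refl by blast
  next
    case False then have "lex_le (f x) (f a)" using lex_le_total by blast
    then show ?thesis using x by blast
  qed
qed

locale yyloc =
  fixes lam eps c \<phi> :: real and k :: nat and idf :: "complex \<Rightarrow> nat" and V :: "complex set"
  assumes lam_pos: "0 < lam" and eps_pos: "0 < eps" and k_gt: "8 < k"
    and c_def: "c = cos (2 * pi / real k) - sin (2 * pi / real k)"
    and c_val: "c = (lam + eps + 1) / ((lam + 1) * (eps + 1))"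
    and finV: "finite V" and civ: "civilized lam V" and inj: "inj_on idf V"
begin

abbreviation "UE \<equiv> udg_edges V"
abbreviation "YE \<equiv> yao_edges k \<phi> idf V"
abbreviation "DE \<equiv> yy_directed k \<phi> idf V"
abbreviation "YY \<equiv> yy_edges k \<phi> idf V"
abbreviation "cn \<equiv> cone_index k \<phi>"

lemma k2: "2 \<le> k" using k_gt by simp

lemma key: "c * ((lam + 1) * (eps + 1)) = lam + eps + 1"
  using lam_pos eps_pos unfolding c_val by simp
lemma h1: "(1 + eps) * (1 - c) = eps * lam / (lam + 1)"
proof -
  have "(1 + eps) * (1 - c) * (lam + 1) = eps * lam" using key by algebra
  then show ?thesis using lam_pos by (simp add: eq_divide_eq)
qed
lemma h2: "c * (1 + eps) - 1 = eps / (lam + 1)"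
proof -
  have "(c * (1 + eps) - 1) * (lam + 1) = eps" using key by algebra
  then show ?thesis using lam_pos by (simp add: eq_divide_eq)
qed
lemma c_pos: "0 < c" using lam_pos eps_pos unfolding c_val by simp
lemma c_le1: "c \<le> 1"
proof -
  have "eps * lam / (lam + 1) \<ge> 0" using lam_pos eps_pos by simp
  with h1 have "(1 + eps) * (1 - c) \<ge> 0" by simp
  with eps_pos show ?thesis by (simp add: zero_le_mult_iff)
qed

lemma UE_iff: "(u, v) \<in> UE \<longleftrightarrow> u \<in> V \<and> v \<in> V \<and> u \<noteq> v \<and> cmod (u - v) \<le> 1"
  by (simp add: udg_edges_def)

lemma UE_lam: "(u, v) \<in> UE \<Longrightarrow> lam \<le> cmod (u - v)"
  using civ by (auto simp: UE_iff civilized_def)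

lemma YE_UE: "(u, v) \<in> YE \<Longrightarrow> (u, v) \<in> UE" by (simp add: yao_edges_def)
lemma DE_YE: "(u, v) \<in> DE \<Longrightarrow> (u, v) \<in> YE" by (simp add: yy_directed_def)
lemma DE_YY: "(u, v) \<in> DE \<Longrightarrow> (u, v) \<in> YY" by (simp add: yy_edges_def)

lemma Y2:
  assumes "(u, v) \<in> UE"
  shows "\<exists>w. (u, w) \<in> YE \<and> cn u w = cn u v \<and> lex_le (edge_id idf u w) (edge_id idf u v)"
proof -
  define S where "S = {w. (u, w) \<in> UE \<and> cn u w = cn u v}"
  have "S \<subseteq> V" by (auto simp: S_def UE_iff)
  then have "finite S" using finV finite_subset by blast
  moreover have "v \<in> S" using assms by (simp add: S_def)
  ultimately obtain w where w: "w \<in> S" "\<forall>y\<in>S. lex_le (edge_id idf u w) (edge_id idf u y)"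
    using ex_min[of S "edge_id idf u"] by blast
  have "(u, w) \<in> YE" using w by (auto simp: yao_edges_def S_def)
  then show ?thesis using w \<open>v \<in> S\<close> by (auto simp: S_def)
qed

lemma Y3:
  assumes "(u, v) \<in> YE"
  shows "\<exists>x. (x, v) \<in> DE \<and> cn v x = cn v u \<and> lex_le (edge_id idf x v) (edge_id idf u v)"
proof -
  define S where "S = {x. (x, v) \<in> YE \<and> cn v x = cn v u}"
  have "S \<subseteq> V" by (auto simp: S_def UE_iff dest: YE_UE)
  then have "finite S" using finV finite_subset by blast
  moreover have "u \<in> S" using assms by (simp add: S_def)
  ultimately obtain x where x: "x \<in> S" "\<forall>y\<in>S. lex_le (edge_id idf x v) (edge_id idf y v)"
    using ex_min[of S "\<lambda>x. edge_id idf x v"] by blast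
  have "(x, v) \<in> DE" using x by (auto simp: yy_directed_def S_def)
  then show ?thesis using x \<open>u \<in> S\<close> by (auto simp: S_def)
qed

lemma G: "cn u v = cn u w \<Longrightarrow> cmod (w - u) \<le> cmod (v - u) \<Longrightarrow>
    cmod (w - v) \<le> cmod (v - u) - c * cmod (w - u)"
  using geom[OF k2 _ _ c_def] by blast

lemma path2: "(u, w) \<in> YY \<Longrightarrow> is_path YY u w [u, w] \<and> path_length [u, w] = cmod (u - w)"
  by (simp add: is_path_Cons2 is_path_single path_length_pw)

lemma lemA:
  assumes yw: "(u, w) \<in> YE"
    and IH: "\<And>a b. (a, b) \<in> UE \<Longrightarrow> cmod (a - b) < cmod (u - w) \<Longrightarrow>
               \<exists>q. is_path YY a b q \<and> path_length q \<le> (1 + eps) * cmod (a - b)"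
  shows "\<exists>q. is_path YY u w q \<and> path_length q \<le> (1 + eps) * cmod (u - w) - (1 + eps) * (1 - c)"
proof -
  have uwU: "(u, w) \<in> UE" using yw by (rule YE_UE)
  obtain x where x: "(x, w) \<in> DE" "cn w x = cn w u" "lex_le (edge_id idf x w) (edge_id idf u w)"
    using Y3[OF yw] by blast
  show ?thesis
  proof (cases "x = u")
    case True
    then have "(u, w) \<in> YY" using x by (simp add: DE_YY)
    note p = path2[OF this]
    have d: "lam \<le> cmod (u - w)" using UE_lam[OF uwU] .
    have "eps * lam / (lam + 1) \<le> eps * lam"
    proof -
      have "0 \<le> eps * lam" using lam_pos eps_pos by simp
      moreover have "1 \<le> lam + 1" using lam_pos by simp
      ultimately show ?thesis by (simp add: divide_le_eq mult_le_cancel_left1)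
    qed
    also have "\<dots> \<le> eps * cmod (u - w)" using d eps_pos by simp
    finally have "(1 + eps) * (1 - c) \<le> eps * cmod (u - w)" using h1 by simp
    then show ?thesis using p by (intro exI[of _ "[u, w]"]) (simp add: algebra_simps)
  next
    case False
    have xwU: "(x, w) \<in> UE" using x(1) by (intro YE_UE DE_YE)
    define t where "t = cmod (x - w)"
    have tl: "lam \<le> t" using UE_lam[OF xwU] by (simp add: t_def)
    have tu: "t \<le> cmod (u - w)" using lex_le_fst[OF x(3)] by (simp add: edge_id_fst t_def)
    have g: "cmod (x - u) \<le> cmod (u - w) - c * t"
      using G[of w u x] x(2) tu by (simp add: t_def norm_minus_commute)
    have ct: "0 < c * t" using c_pos tl lam_pos by simp
    have lt: "cmod (u - x) < cmod (u - w)" using g ct by (simp add: norm_minus_commute)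
    have uxU: "(u, x) \<in> UE" using False uwU xwU lt by (auto simp: UE_iff)
    obtain q1 where q1: "is_path YY u x q1" "path_length q1 \<le> (1 + eps) * cmod (u - x)"
      using IH[OF uxU lt] by blast
    have xw: "(x, w) \<in> YY" using x(1) by (simp add: DE_YY)
    note p2 = path2[OF xw]
    note cc = path_concat[OF q1(1) conjunct1[OF p2], of "\<lambda>(a, b). cmod (a - b)"]
    have L: "path_length (q1 @ tl [x, w]) = path_length q1 + t"
      using cc p2 by (simp add: path_length_pw t_def)
    have "path_length q1 + t \<le> (1 + eps) * (cmod (u - w) - c * t) + t"
    proof -
      have g': "cmod (u - x) \<le> cmod (u - w) - c * t" using g by (simp add: norm_minus_commute)
      show ?thesis using q1(2) mult_left_mono[OF g', of "1 + eps"] eps_pos by linarith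
    qed
    also have "\<dots> = (1 + eps) * cmod (u - w) - t * (c * (1 + eps) - 1)" by (simp add: algebra_simps)
    also have "\<dots> \<le> (1 + eps) * cmod (u - w) - (1 + eps) * (1 - c)"
    proof -
      have "eps * lam / (lam + 1) \<le> t * (eps / (lam + 1))"
        using tl lam_pos eps_pos by (simp add: divide_le_eq mult.commute)
      then show ?thesis using h1 h2 by simp
    qed
    finally show ?thesis using cc L by (intro exI[of _ "q1 @ tl [x, w]"]) simp
  qed
qed

lemma step:
  assumes uv: "(u, v) \<in> UE"
    and IH: "\<And>a b. (a, b) \<in> UE \<Longrightarrow> cmod (a - b) < cmod (u - v) \<Longrightarrow>
               \<exists>q. is_path YY a b q \<and> path_length q \<le> (1 + eps) * cmod (a - b)"
  shows "\<exists>q. is_path YY u v q \<and> path_length q \<le> (1 + eps) * cmod (u - v)"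
proof -
  obtain w where w: "(u, w) \<in> YE" "cn u w = cn u v" "lex_le (edge_id idf u w) (edge_id idf u v)"
    using Y2[OF uv] by blast
  have duw: "cmod (u - w) \<le> cmod (u - v)" using lex_le_fst[OF w(3)] by (simp add: edge_id_fst)
  have c1: "0 \<le> (1 + eps) * (1 - c)" using c_le1 eps_pos by simp
  obtain q1 where q1: "is_path YY u w q1"
      "path_length q1 \<le> (1 + eps) * cmod (u - w) - (1 + eps) * (1 - c)"
    using lemA[OF w(1)] IH duw by fastforce
  show ?thesis
  proof (cases "w = v")
    case True
    then show ?thesis using q1 c1 by auto
  next
    case False
    have uwU: "(u, w) \<in> UE" using w(1) by (rule YE_UE)
    have g: "cmod (w - v) \<le> cmod (v - u) - c * cmod (w - u)"
      using G[of u v w] w(2) duw by (simp add: norm_minus_commute)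
    have "lam \<le> cmod (w - u)" using UE_lam[OF uwU] by (simp add: norm_minus_commute)
    then have "0 < cmod (w - u)" using lam_pos by linarith
    then have "0 < c * cmod (w - u)" using c_pos by simp
    then have lt: "cmod (w - v) < cmod (u - v)" using g by (simp add: norm_minus_commute)
    have wvU: "(w, v) \<in> UE" using False uwU uv lt by (auto simp: UE_iff)
    obtain q2 where q2: "is_path YY w v q2" "path_length q2 \<le> (1 + eps) * cmod (w - v)"
      using IH[OF wvU lt] by blast
    note cc = path_concat[OF q1(1) q2(1), of "\<lambda>(a, b). cmod (a - b)"]
    have L: "path_length (q1 @ tl q2) = path_length q1 + path_length q2"
      using cc by (simp add: path_length_pw)
    have uw1: "cmod (u - w) \<le> 1" using uwU by (simp add: UE_iff)
    have "path_length q1 + path_length q2 \<le> (1 + eps) * cmod (u - w) - (1 + eps) * (1 - c)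
           + (1 + eps) * (cmod (v - u) - c * cmod (w - u))"
      using q1(2) q2(2) g eps_pos by (smt (verit) mult_left_mono)
    also have "\<dots> = (1 + eps) * cmod (u - v) - (1 + eps) * (1 - c) * (1 - cmod (u - w))"
      by (simp add: algebra_simps norm_minus_commute)
    also have "\<dots> \<le> (1 + eps) * cmod (u - v)"
      using c1 uw1 by simp
    finally show ?thesis using cc L by (intro exI[of _ "q1 @ tl q2"]) simp
  qed
qed

end



context yyloc begin

lemma finUE: "finite UE"
proof -
  have "UE \<subseteq> V \<times> V" by (auto simp: UE_iff)
  then show ?thesis using finV finite_subset by blast
qed

lemma all_edges:
  "(u, v) \<in> UE \<Longrightarrow> \<exists>q. is_path YY u v q \<and> path_length q \<le> (1 + eps) * cmod (u - v)"
proof (induction "card {p \<in> UE. cmod (fst p - snd p) < cmod (u - v)}" arbitrary: u v rule: less_induct)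
  case less
  show ?case
  proof (rule step[OF less.prems])
    fix a b assume ab: "(a, b) \<in> UE" and lt: "cmod (a - b) < cmod (u - v)"
    have "{p \<in> UE. cmod (fst p - snd p) < cmod (a - b)} \<subset> {p \<in> UE. cmod (fst p - snd p) < cmod (u - v)}"
    proof (rule psubsetI)
      show "{p \<in> UE. cmod (fst p - snd p) < cmod (a - b)} \<subseteq> {p \<in> UE. cmod (fst p - snd p) < cmod (u - v)}"
        using lt by auto
      have "(a, b) \<in> {p \<in> UE. cmod (fst p - snd p) < cmod (u - v)}" using ab lt by simp
      moreover have "(a, b) \<notin> {p \<in> UE. cmod (fst p - snd p) < cmod (a - b)}" by simp
      ultimately show "{p \<in> UE. cmod (fst p - snd p) < cmod (a - b)} \<noteq> {p \<in> UE. cmod (fst p - snd p) < cmod (u - v)}"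
        by blast
    qed
    then have "card {p \<in> UE. cmod (fst p - snd p) < cmod (a - b)} < card {p \<in> UE. cmod (fst p - snd p) < cmod (u - v)}"
      by (rule psubset_card_mono[rotated]) (use finUE in auto)
    then show "\<exists>q. is_path YY a b q \<and> path_length q \<le> (1 + eps) * cmod (a - b)"
      using less.hyps ab by blast
  qed
qed

lemma card_cone:
  assumes "S \<subseteq> V" "inj_on (cn u) S"
  shows "card S \<le> k"
proof -
  have "card S = card (cn u ` S)" using assms(2) by (simp add: card_image)
  also have "\<dots> \<le> card {0..<int k}"
    by (rule card_mono) (use cone_range k_gt in auto)
  finally show ?thesis by simp
qed

lemma out_card: "u \<in> V \<Longrightarrow> card {v. (u, v) \<in> DE} \<le> k"
proof (rule card_cone)
  show "{v. (u, v) \<in> DE} \<subseteq> V" by (auto simp: UE_iff dest!: DE_YE YE_UE)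
  show "inj_on (cn u) {v. (u, v) \<in> DE}"
  proof (rule inj_onI)
    fix v v' assume v: "v \<in> {v. (u, v) \<in> DE}" and v': "v' \<in> {v. (u, v) \<in> DE}" and e: "cn u v = cn u v'"
    have yv: "(u, v) \<in> YE" and yv': "(u, v') \<in> YE" using v v' by (auto dest: DE_YE)
    have l1: "lex_le (edge_id idf u v) (edge_id idf u v')"
      using yv YE_UE[OF yv'] e by (auto simp: yao_edges_def)
    have l2: "lex_le (edge_id idf u v') (edge_id idf u v)"
      using yv' YE_UE[OF yv] e by (auto simp: yao_edges_def)
    have uvs: "u \<in> V" "v \<in> V" "v' \<in> V" "u \<noteq> v" "u \<noteq> v'"
      using YE_UE[OF yv] YE_UE[OF yv'] by (auto simp: UE_iff)
    have "idf u \<noteq> idf v" "idf u \<noteq> idf v'" using uvs inj by (auto dest: inj_onD)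
    from edge_id_inj[OF this lex_le_antisym[OF l1 l2]] show "v = v'"
      using uvs inj by (auto dest: inj_onD)
  qed
qed

lemma in_card: "u \<in> V \<Longrightarrow> card {v. (v, u) \<in> DE} \<le> k"
proof (rule card_cone)
  show "{v. (v, u) \<in> DE} \<subseteq> V" by (auto simp: UE_iff dest!: DE_YE YE_UE)
  show "inj_on (cn u) {v. (v, u) \<in> DE}"
  proof (rule inj_onI)
    fix v v' assume v: "v \<in> {v. (v, u) \<in> DE}" and v': "v' \<in> {v. (v, u) \<in> DE}" and e: "cn u v = cn u v'"
    have yv: "(v, u) \<in> YE" and yv': "(v', u) \<in> YE" using v v' by (auto dest: DE_YE)
    have l1: "lex_le (edge_id idf v u) (edge_id idf v' u)"
      using v yv' e by (auto simp: yy_directed_def)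
    have l2: "lex_le (edge_id idf v' u) (edge_id idf v u)"
      using v' yv e by (auto simp: yy_directed_def)
    have uvs: "u \<in> V" "v \<in> V" "v' \<in> V" "u \<noteq> v" "u \<noteq> v'"
      using YE_UE[OF yv] YE_UE[OF yv'] by (auto simp: UE_iff)
    have "idf u \<noteq> idf v" "idf u \<noteq> idf v'" using uvs inj by (auto dest: inj_onD)
    moreover have "edge_id idf u v = edge_id idf u v'"
      using lex_le_antisym[OF l1 l2] by (simp add: edge_id_sym)
    ultimately have "idf v = idf v'" by (rule edge_id_inj)
    then show "v = v'" using uvs inj by (auto dest: inj_onD)
  qed
qed

lemma degree: "max_degree_le V YY (2 * k)"
  unfolding max_degree_le_def
proof
  fix u assume u: "u \<in> V"
  have "{v. (u, v) \<in> YY} = {v. (u, v) \<in> DE} \<union> {v. (v, u) \<in> DE}" by (auto simp: yy_edges_def)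
  then have "card {v. (u, v) \<in> YY} \<le> card {v. (u, v) \<in> DE} + card {v. (v, u) \<in> DE}"
    by (simp add: card_Un_le)
  also have "\<dots> \<le> k + k" using out_card[OF u] in_card[OF u] by simp
  finally show "card {v. (u, v) \<in> YY} \<le> 2 * k" by simp
qed

lemma spanner: "length_spanner V UE YY (1 + eps)"
  unfolding length_spanner_def
proof (intro ballI allI impI)
  fix u v p assume "is_path UE u v p"
  from path_lift[of UE YY "\<lambda>(a, b). cmod (a - b)" "1 + eps", OF _ this] all_edges
  show "\<exists>q. is_path YY u v q \<and> path_length q \<le> (1 + eps) * path_length p"
    by (auto simp: path_length_pw)
qed

lemma power:
  assumes b: "1 \<le> \<beta>"
  shows "power_stretch \<beta> V UE YY ((1 + eps) powr \<beta>)"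
  unfolding power_stretch_def
proof (intro ballI allI impI)
  fix u v p assume pp: "is_path UE u v p"
  have e: "\<exists>q. is_path YY a b q \<and> pw (\<lambda>(a, b). cmod (a - b) powr \<beta>) q
              \<le> (1 + eps) powr \<beta> * (\<lambda>(a, b). cmod (a - b) powr \<beta>) (a, b)" if ab: "(a, b) \<in> UE" for a b
  proof -
    obtain q where q: "is_path YY a b q" "path_length q \<le> (1 + eps) * cmod (a - b)"
      using all_edges[OF ab] by blast
    have "pw (\<lambda>(a, b). cmod (a - b) powr \<beta>) q \<le> (path_length q) powr \<beta>"
      using power_le_length[OF b, of q] by (simp add: path_length_pw)
    also have "\<dots> \<le> ((1 + eps) * cmod (a - b)) powr \<beta>"
      by (rule powr_mono2) (use q b pw_nonneg[of q] in \<open>auto simp: path_length_pw\<close>)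
    also have "\<dots> = (1 + eps) powr \<beta> * cmod (a - b) powr \<beta>"
      using eps_pos by (simp add: powr_mult)
    finally show ?thesis using q by auto
  qed
  from path_lift[of UE YY "\<lambda>(a, b). cmod (a - b) powr \<beta>" "(1 + eps) powr \<beta>", OF e pp]
  show "\<exists>q. is_path YY u v q \<and> path_power \<beta> q \<le> (1 + eps) powr \<beta> * path_power \<beta> p"
    by (auto simp: path_power_pw)
qed

end

theorem corollary1:
  fixes lam eps \<beta> \<phi> :: real and k :: nat and V :: "complex set" and idf :: "complex \<Rightarrow> nat"
  assumes "0 < lam" and "0 < eps" and "8 < k"
    and "cos (2 * pi / real k) - sin (2 * pi / real k) = (lam + eps + 1) / ((lam + 1) * (eps + 1))"
    and "2 \<le> \<beta>" and "\<beta> \<le> 5"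
    and "finite V"
    and "graph_connected V (udg_edges V)"
    and "civilized lam V"
    and "inj_on idf V"
  shows "max_degree_le V (yy_edges k \<phi> idf V) (2 * k)
    \<and> length_spanner V (udg_edges V) (yy_edges k \<phi> idf V) (1 + eps)
    \<and> power_stretch \<beta> V (udg_edges V) (yy_edges k \<phi> idf V) ((1 + eps) powr \<beta>)"
proof -
  interpret yyloc lam eps "cos (2 * pi / real k) - sin (2 * pi / real k)" \<phi> k idf V
    by unfold_locales (use assms in auto)
  show ?thesis using degree spanner power assms(5) by simp
qed

end
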